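(* If $A$ is an $m$-dimensional permutation array of size $n_1\times\cdots\times n_m$ and odd order $n$, then there is an $n_1\times\cdots\times n_m$ window in the periodic extension of $A$ which has a repeated difference vector. In particular, no $m$-dimensional Costas array of odd order is periodic Costas.
   Context: For $n\in\mathbb{N}$, $[n]=\{1,\dots,n\}$; $m\ge2$, all $n_i\ge2$. A binary array $A:[n_1]\times\cdots\times[n_m]\to\{0,1\}$ is an $m$-dimensional permutation array if there exist $k$ with $1\le k<m$ and a bijection $\varphi:[n_1]\times\cdots\times[n_k]\to[n_{k+1}]\times\cdots\times[n_m]$ with $A(a_1,\dots,a_m)=1$ iff $\varphi(a_1,\dots,a_k)=(a_{k+1},\dots,a_m)$; points with value 1 are dots; order $n=n_1\cdots n_k$. The periodic extension $\mathbb{A}:\mathbb{Z}^m\to\{0,1\}$ is $\mathbb{A}(a_1,\dots,a_m)=A(a_1',\dots,a_m')$ with $a_i'\in[n_i]$, $a_i'\equiv a_i\pmod{n_i}$; an $n_1\times\cdots\times n_m$ window is the restriction of $\mathbb{A}$ to a box $\prod_i\{k_i,\dots,k_i+n_i-1\}$. The difference vector from dot $(a_i)$ to distinct dot $(w_i)$ is $\langle w_i-a_i\rangle_i$; a window has a repeated difference vector if two distinct ordered pairs of distinct dots in it have equal difference vectors. An $m$-dimensional Costas array is a permutation array with no repeated difference vector; it is periodic Costas if every $n_1\times\cdots\times n_m$ window of its periodic extension has no repeated difference vector. *)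

theory Defs
  imports Main
begin

text \<open>Points of Z^m are int lists of length m; coordinates are 1-based as in the paper.
  A size is a list ns = [n_1,...,n_m].\<close>

definition box :: "nat list \<Rightarrow> int list set" where
  "box ns = {a. length a = length ns \<and>
                (\<forall>i<length ns. 1 \<le> a ! i \<and> a ! i \<le> int (ns ! i))}"

definition perm_array_split :: "nat list \<Rightarrow> (int list \<Rightarrow> nat) \<Rightarrow> nat \<Rightarrow> bool" where
  "perm_array_split ns A k \<longleftrightarrow>
     1 \<le> k \<and> k < length ns \<and>
     (\<forall>a\<in>box ns. A a \<in> {0, 1}) \<and>
     (\<exists>\<phi>. bij_betw \<phi> (box (take k ns)) (box (drop k ns)) \<and>
           (\<forall>a\<in>box ns. A a = 1 \<longleftrightarrow> \<phi> (take k a) = drop k a))"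

definition perm_array :: "nat list \<Rightarrow> (int list \<Rightarrow> nat) \<Rightarrow> bool" where
  "perm_array ns A \<longleftrightarrow> (\<exists>k. perm_array_split ns A k)"

definition order_of_split :: "nat list \<Rightarrow> nat \<Rightarrow> nat" where
  "order_of_split ns k = prod_list (take k ns)"

definition per_ext :: "nat list \<Rightarrow> (int list \<Rightarrow> nat) \<Rightarrow> int list \<Rightarrow> nat" where
  "per_ext ns A a = A (map (\<lambda>(x, n). (x - 1) mod int n + 1) (zip a ns))"

definition window :: "nat list \<Rightarrow> int list \<Rightarrow> int list set" where
  "window ns c = {a. length a = length ns \<and>
                    (\<forall>i<length ns. c ! i \<le> a ! i \<and> a ! i \<le> c ! i + int (ns ! i) - 1)}"

definition diff_vec :: "int list \<Rightarrow> int list \<Rightarrow> int list" where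
  "diff_vec a w = map2 (\<lambda>wi ai. wi - ai) w a"

definition has_repeated_diff :: "int list set \<Rightarrow> bool" where
  "has_repeated_diff D \<longleftrightarrow>
     (\<exists>a w a' w'. a \<in> D \<and> w \<in> D \<and> a' \<in> D \<and> w' \<in> D \<and> a \<noteq> w \<and> a' \<noteq> w' \<and>
        (a, w) \<noteq> (a', w') \<and> diff_vec a w = diff_vec a' w')"

definition window_has_repeated_diff :: "nat list \<Rightarrow> (int list \<Rightarrow> nat) \<Rightarrow> int list \<Rightarrow> bool" where
  "window_has_repeated_diff ns A c \<longleftrightarrow>
     has_repeated_diff {a \<in> window ns c. per_ext ns A a = 1}"

definition costas :: "nat list \<Rightarrow> (int list \<Rightarrow> nat) \<Rightarrow> bool" where
  "costas ns A \<longleftrightarrow> perm_array ns A \<and> \<not> has_repeated_diff {a \<in> box ns. A a = 1}"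

definition periodic_costas :: "nat list \<Rightarrow> (int list \<Rightarrow> nat) \<Rightarrow> bool" where
  "periodic_costas ns A \<longleftrightarrow> costas ns A \<and>
     (\<forall>c. length c = length ns \<longrightarrow> \<not> window_has_repeated_diff ns A c)"

end

theory Submission
  imports Defs
begin

lemma box_Nil: "box [] = {[]}" by (auto simp: box_def)

lemma box_Cons: "box (x # l) = (\<lambda>(a,t). a # t) ` ({1..int x} \<times> box l)"
proof (intro set_eqI iffI)
  fix v assume v: "v \<in> box (x # l)"
  then obtain a t where vt: "v = a # t" unfolding box_def by (cases v) auto
  have "a \<in> {1..int x}" using v vt unfolding box_def by (auto dest: spec[of _ 0])
  moreover have "t \<in> box l" using v vt unfolding box_def by (auto dest: spec[of _ "Suc _"])
  ultimately show "v \<in> (\<lambda>(a,t). a # t) ` ({1..int x} \<times> box l)" using vt by auto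
next
  fix v assume "v \<in> (\<lambda>(a,t). a # t) ` ({1..int x} \<times> box l)"
  then show "v \<in> box (x # l)" unfolding box_def by (auto simp: less_Suc_eq_0_disj)
qed

lemma finite_card_box: "finite (box l) \<and> card (box l) = prod_list l"
proof (induction l)
  case Nil then show ?case by (simp add: box_Nil)
next
  case (Cons x l)
  have inj: "inj_on (\<lambda>(a,t). a # t) ({1..int x} \<times> box l)" by (auto simp: inj_on_def)
  show ?case using Cons by (simp add: box_Cons card_image[OF inj] card_cartesian_product)
qed

lemma mod_add_cases:
  fixes a b n :: int
  assumes "0 \<le> a" "a < n" "0 \<le> b" "b < n"
  shows "(a+b) mod n = (if a+b < n then a+b else a+b-n)"
proof (cases "a + b < n")
  case True then show ?thesis using assms by simp
next
  case False
  have "(a+b) mod n = (a+b-n) mod n" by (simp add: mod_diff_right_eq[symmetric])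
  also have "\<dots> = a+b-n" using assms False by (intro mod_pos_pos_trivial) auto
  finally show ?thesis using False by simp
qed

lemma choose_c:
  fixes n p q p' q' :: int
  assumes n: "n > 0" "odd n" and cong: "(q - p) mod n = (q' - p') mod n"
  shows "\<exists>c. (q - c) mod n - (p - c) mod n = (q' - c) mod n - (p' - c) mod n"
proof -
  define d where "d = (q - p) mod n"
  define t where "t = (p' - p) mod n"
  have d: "0 \<le> d" "d < n" using n by (auto simp: d_def)
  have t: "0 \<le> t" "t < n" using n by (auto simp: t_def)
  have nd: "2 * d \<noteq> n" using n(2) by auto
  define x where "x = (if t < n - d then 0 else if t > n - d then n - 1 else if 2*d < n then d else n - d)"
  have x: "0 \<le> x" "x < n" using d t n(1) by (auto simp: x_def)
  define r where "r = (t + x) mod n"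
  have r: "0 \<le> r" "r < n" using n by (auto simp: r_def)
  have r': "r = (if t + x < n then t + x else t + x - n)" unfolding r_def using mod_add_cases[OF t x] .
  have key: "(x + d < n) = (r + d < n)" using r' d t nd unfolding x_def by auto
  define c where "c = p - x"
  have e1: "(p - c) mod n = x" using x by (simp add: c_def)
  have e2: "(q - c) mod n = (x + d) mod n"
    unfolding c_def d_def by (simp add: mod_simps algebra_simps)
  have e3: "(p' - c) mod n = r"
    unfolding c_def r_def t_def by (simp add: mod_simps algebra_simps)
  have "(q' - c) mod n = ((q' - p') mod n + (p' - c) mod n) mod n"
    by (simp add: mod_add_eq)
  then have e4: "(q' - c) mod n = (r + d) mod n"
    using e3 cong by (simp add: d_def add.commute)
  show ?thesis
    apply (rule exI[of _ c])
    unfolding e1 e2 e3 e4 mod_add_cases[OF x d] mod_add_cases[OF r d] using key by auto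
qed


lemma mod_shift_lemma:
  fixes a b n :: int
  shows "(a mod n + b - a) mod n = b mod n"
proof -
  have "(a mod n + b - a) mod n = (a mod n + (b - a)) mod n" by (simp add: algebra_simps)
  also have "\<dots> = (a + (b - a)) mod n" by (simp add: mod_add_left_eq)
  finally show ?thesis by simp
qed

lemma lift_back:
  fixes c y n :: int
  assumes "1 \<le> y" "y \<le> n"
  shows "(c + (y - c) mod n - 1) mod n + 1 = y"
proof -
  have "(c + (y - c) mod n - 1) mod n = ((y - c) mod n + (c - 1)) mod n" by (simp add: algebra_simps)
  also have "\<dots> = ((y - c) + (c - 1)) mod n" by (simp add: mod_add_left_eq)
  also have "\<dots> = y - 1" using assms by simp
  finally show ?thesis by simp
qed

lemma mod_eq_zero_box:
  fixes a b n :: int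
  assumes "1 \<le> a" "a \<le> n" "1 \<le> b" "b \<le> n" "(a - b) mod n = 0"
  shows "a = b"
proof -
  have "n dvd (a - b)" using assms(5) by (simp add: dvd_eq_mod_eq_0)
  then obtain k where k: "a - b = n * k" by (auto elim: dvdE)
  have lt: "\<bar>a - b\<bar> < n" using assms by auto
  have "k = 0"
  proof (rule ccontr)
    assume "k \<noteq> 0"
    then have "1 \<le> \<bar>k\<bar>" by simp
    moreover have "n > 0" using assms by simp
    ultimately have "n * 1 \<le> n * \<bar>k\<bar>" by (intro mult_left_mono) auto
    also have "\<dots> = \<bar>a - b\<bar>" using k \<open>n > 0\<close> by (simp add: abs_mult)
    finally show False using lt by simp
  qed
  then show ?thesis using k by simp
qed


theorem mainTheorem7:
  fixes ns :: "nat list" and A :: "int list \<Rightarrow> nat" and k :: nat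
  assumes "length ns \<ge> 2"
    and "\<forall>i<length ns. ns ! i \<ge> 2"
    and "perm_array_split ns A k"
    and "odd (order_of_split ns k)"
  shows "(\<exists>c. length c = length ns \<and> window_has_repeated_diff ns A c)
         \<and> \<not> periodic_costas ns A"
proof -
  note nsge = assms(2)
  define m where "m = length ns"
  obtain \<phi> where k1: "1 \<le> k" and km: "k < m"
    and phi: "bij_betw \<phi> (box (take k ns)) (box (drop k ns))"
    and Aeq: "\<forall>a\<in>box ns. A a = 1 \<longleftrightarrow> \<phi> (take k a) = drop k a"
    using assms(3) unfolding perm_array_split_def m_def by blast
  define T where "T = box (take k ns)"
  define S where "S = box (drop k ns)"
  have finT: "finite T" and cardT: "card T = prod_list (take k ns)"
    using finite_card_box unfolding T_def by auto
  have finS: "finite S" and cardS: "card S = prod_list (drop k ns)"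
    using finite_card_box unfolding S_def by auto
  have cardTS: "card T = card S" using bij_betw_same_card[OF phi] unfolding T_def S_def .
  have "prod_list ns = prod_list (take k ns) * prod_list (drop k ns)"
    by (metis append_take_drop_id prod_list.append)
  then have oddprod: "odd (prod_list ns)"
    using assms(4) cardT cardS cardTS unfolding order_of_split_def by simp
  have oddall: "odd (ns ! i)" if "i < m" for i
  proof
    assume "even (ns ! i)"
    moreover have "ns ! i dvd prod_list ns" using that unfolding m_def
      by (intro prod_list_dvd) simp
    ultimately show False using oddprod using dvd_trans by blast
  qed
  have Tmem: "length x = k \<and> (\<forall>i<k. 1 \<le> x ! i \<and> x ! i \<le> int (ns ! i))" if "x \<in> T" for x
    using that km unfolding T_def box_def m_def by auto
  have Smem: "length y = m - k \<and> (\<forall>j<m-k. 1 \<le> y ! j \<and> y ! j \<le> int (ns ! (k + j)))" if "y \<in> S" for y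
    using that km unfolding S_def box_def m_def by auto
  have emb: "x @ y \<in> box ns" if "x \<in> T" "y \<in> S" for x y
  proof -
    have lx: "length x = k" and lyy: "length y = m - k" using Tmem[OF that(1)] Smem[OF that(2)] by auto
    show ?thesis unfolding box_def
    proof (rule CollectI, rule conjI)
      show "length (x @ y) = length ns" using lx lyy km unfolding m_def by simp
    next
      show "\<forall>i<length ns. 1 \<le> (x @ y) ! i \<and> (x @ y) ! i \<le> int (ns ! i)"
      proof (intro allI impI)
      fix i assume i: "i < length ns"
      show "1 \<le> (x @ y) ! i \<and> (x @ y) ! i \<le> int (ns ! i)"
      proof (cases "i < k")
        case True then show ?thesis using Tmem[OF that(1)] lx by (simp add: nth_append)
      next
        case False
        then have "i - k < m - k" using i unfolding m_def by simp
        then have "1 \<le> y ! (i - k) \<and> y ! (i - k) \<le> int (ns ! (k + (i - k)))" using Smem[OF that(2)] by blast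
        then show ?thesis using lx False by (simp add: nth_append)
      qed
      qed
    qed
  qed
  have phiS: "\<phi> x \<in> S" if "x \<in> T" for x
    using phi that unfolding T_def S_def bij_betw_def by auto
  have phiinj: "inj_on \<phi> T" using phi unfolding T_def bij_betw_def by auto
  define P where "P x = x @ \<phi> x" for x
  have Pbox: "P x \<in> box ns" if "x \<in> T" for x unfolding P_def using emb[OF that phiS[OF that]] .
  have Ptake: "take k (P x) = x" and Pdrop: "drop k (P x) = \<phi> x" if "x \<in> T" for x
    using Tmem[OF that] unfolding P_def by auto
  have Pdot: "A (P x) = 1" if "x \<in> T" for x using Aeq Pbox[OF that] Ptake[OF that] Pdrop[OF that] by auto
  have n0: "ns ! 0 \<ge> 2" using nsge km unfolding m_def by (metis gr_zeroI not_less_zero)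
  define \<sigma> where "\<sigma> x = x[0 := x ! 0 mod int (ns ! 0) + 1]" for x :: "int list"
  have sigT: "\<sigma> x \<in> T" and signe: "\<sigma> x \<noteq> x" if "x \<in> T" for x
  proof -
    have lx: "length x = k" and bx: "\<forall>i<k. 1 \<le> x ! i \<and> x ! i \<le> int (ns ! i)" using Tmem[OF that] by auto
    have x0: "1 \<le> x ! 0" "x ! 0 \<le> int (ns ! 0)" using bx k1 by auto
    have npos: "int (ns ! 0) > 0" using n0 by simp
    have r: "0 \<le> x ! 0 mod int (ns ! 0)" "x ! 0 mod int (ns ! 0) < int (ns ! 0)" using npos by auto
    show "\<sigma> x \<in> T" unfolding T_def box_def \<sigma>_def
    proof (rule CollectI, rule conjI)
      show "length (x[0 := x ! 0 mod int (ns ! 0) + 1]) = length (take k ns)" using lx km unfolding m_def by simp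
    next
      show "\<forall>i<length (take k ns). 1 \<le> x[0 := x ! 0 mod int (ns ! 0) + 1] ! i \<and> x[0 := x ! 0 mod int (ns ! 0) + 1] ! i \<le> int (take k ns ! i)"
      proof (intro allI impI)
      fix i assume i: "i < length (take k ns)"
      then have ik: "i < k" by simp
      show "1 \<le> x[0 := x ! 0 mod int (ns ! 0) + 1] ! i \<and> x[0 := x ! 0 mod int (ns ! 0) + 1] ! i \<le> int (take k ns ! i)"
        using bx ik lx r by (cases "i = 0") auto
      qed
    qed
    show "\<sigma> x \<noteq> x"
    proof
      assume "\<sigma> x = x"
      then have "\<sigma> x ! 0 = x ! 0" by simp
      moreover have "\<sigma> x ! 0 = x ! 0 mod int (ns ! 0) + 1" using lx k1 unfolding \<sigma>_def by simp
      ultimately have "x ! 0 mod int (ns ! 0) + 1 = x ! 0" by simp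
      moreover have "x ! 0 < int (ns ! 0) \<Longrightarrow> x ! 0 mod int (ns ! 0) = x ! 0" using x0 by simp
      moreover have "x ! 0 = int (ns ! 0) \<Longrightarrow> x ! 0 mod int (ns ! 0) = 0" by simp
      ultimately show False using x0 n0 by fastforce
    qed
  qed
  define h where "h x = map (\<lambda>j. (\<phi> (\<sigma> x) ! j - \<phi> x ! j) mod int (ns ! (k + j)) + 1) [0..<m-k]" for x
  define ones where "ones = replicate (m - k) (1::int)"
  have onesS: "ones \<in> S" unfolding ones_def S_def box_def using km unfolding m_def
  proof (auto simp: nth_drop)
    fix i assume "i < length ns - k"
    then have "k + i < length ns" by simp
    then show "Suc 0 \<le> ns ! (k + i)" using nsge by force
  qed
  have hS: "h x \<in> S - {ones}" if "x \<in> T" for x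
  proof -
    have s1: "\<phi> (\<sigma> x) \<in> S" and s2: "\<phi> x \<in> S" using phiS sigT that by auto
    have hS': "h x \<in> S" unfolding S_def box_def h_def using km unfolding m_def
    proof (auto simp: nth_drop)
      fix i assume "i < length ns - k"
      then have "k + i < length ns" by simp
      then have pos: "int (ns ! (k + i)) > 0" using nsge by force
      show "0 \<le> (\<phi> (\<sigma> x) ! i - \<phi> x ! i) mod int (ns ! (k + i))" using pos by simp
      have "(\<phi> (\<sigma> x) ! i - \<phi> x ! i) mod int (ns ! (k + i)) < int (ns ! (k + i))" using pos by simp
      then show "(\<phi> (\<sigma> x) ! i - \<phi> x ! i) mod int (ns ! (k + i)) + 1 \<le> int (ns ! (k + i))" by linarith
    qed
    have "h x \<noteq> ones"
    proof
      assume eq: "h x = ones"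
      have phieq: "\<phi> (\<sigma> x) = \<phi> x"
      proof (rule nth_equalityI)
        show "length (\<phi> (\<sigma> x)) = length (\<phi> x)" using Smem[OF s1] Smem[OF s2] by simp
      next
        fix j assume "j < length (\<phi> (\<sigma> x))"
        then have j: "j < m - k" using Smem[OF s1] by simp
        have "h x ! j = 1" using eq j unfolding ones_def by simp
        then have md: "(\<phi> (\<sigma> x) ! j - \<phi> x ! j) mod int (ns ! (k + j)) = 0" using j unfolding h_def by simp
        have a: "1 \<le> \<phi> (\<sigma> x) ! j \<and> \<phi> (\<sigma> x) ! j \<le> int (ns ! (k + j))" using Smem[OF s1] j by blast
        have b: "1 \<le> \<phi> x ! j \<and> \<phi> x ! j \<le> int (ns ! (k + j))" using Smem[OF s2] j by blast
        show "\<phi> (\<sigma> x) ! j = \<phi> x ! j"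
          apply (rule mod_eq_zero_box[of _ "int (ns ! (k + j))"])
          using a b md by auto
      qed
      have "\<sigma> x = x" using inj_onD[OF phiinj phieq sigT[OF that] that] .
      then show False using signe[OF that] by simp
    qed
    then show ?thesis using hS' by simp
  qed
  have "\<not> inj_on h T"
  proof
    assume inj: "inj_on h T"
    have "card T = card (h ` T)" using card_image[OF inj] by simp
    also have "\<dots> \<le> card (S - {ones})" using hS finS by (intro card_mono) auto
    also have "\<dots> < card S" by (rule card_Diff1_less[OF finS onesS])
    finally show False using cardTS by simp
  qed
  then obtain x x' where xT: "x \<in> T" and x'T: "x' \<in> T" and xx': "x \<noteq> x'" and hxx: "h x = h x'"
    unfolding inj_on_def by blast
  define p where "p = P x"
  define q where "q = P (\<sigma> x)"
  define p' where "p' = P x'"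
  define q' where "q' = P (\<sigma> x')"
  have boxes: "p \<in> box ns" "q \<in> box ns" "p' \<in> box ns" "q' \<in> box ns"
    unfolding p_def q_def p'_def q'_def using Pbox sigT xT x'T by auto
  have dots: "A p = 1" "A q = 1" "A p' = 1" "A q' = 1"
    unfolding p_def q_def p'_def q'_def using Pdot sigT xT x'T by auto
  have pq: "p \<noteq> q"
  proof
    assume "p = q" then have "take k p = take k q" by simp
    then show False using Ptake[OF xT] Ptake[OF sigT[OF xT]] signe[OF xT] unfolding p_def q_def by simp
  qed
  have pq': "p' \<noteq> q'"
  proof
    assume "p' = q'" then have "take k p' = take k q'" by simp
    then show False using Ptake[OF x'T] Ptake[OF sigT[OF x'T]] signe[OF x'T] unfolding p'_def q'_def by simp
  qed
  have pp': "p \<noteq> p'"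
  proof
    assume "p = p'" then have "take k p = take k p'" by simp
    then show False using Ptake[OF xT] Ptake[OF x'T] xx' unfolding p_def p'_def by simp
  qed
  have congr: "(q ! i - p ! i) mod int (ns ! i) = (q' ! i - p' ! i) mod int (ns ! i)" if i: "i < m" for i
  proof (cases "i < k")
    case True
    have lens: "length x = k" "length x' = k" "length (\<sigma> x) = k" "length (\<sigma> x') = k"
      using Tmem xT x'T sigT by auto
    have e: "q ! i = \<sigma> x ! i" "p ! i = x ! i" "q' ! i = \<sigma> x' ! i" "p' ! i = x' ! i"
      unfolding p_def q_def p'_def q'_def P_def using lens True by (auto simp: nth_append)
    show ?thesis
    proof (cases "i = 0")
      case True
      then show ?thesis unfolding e \<sigma>_def using lens k1 by (simp add: mod_shift_lemma)
    next
      case False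
      then show ?thesis unfolding e \<sigma>_def by simp
    qed
  next
    case False
    have lens: "length x = k" "length x' = k" "length (\<sigma> x) = k" "length (\<sigma> x') = k"
      using Tmem xT x'T sigT by auto
    have e: "q ! i = \<phi> (\<sigma> x) ! (i - k)" "p ! i = \<phi> x ! (i - k)"
       "q' ! i = \<phi> (\<sigma> x') ! (i - k)" "p' ! i = \<phi> x' ! (i - k)"
      unfolding p_def q_def p'_def q'_def P_def using lens False by (auto simp: nth_append)
    have j: "i - k < m - k" using i False by simp
    have "h x ! (i - k) = h x' ! (i - k)" using hxx by simp
    then have "(\<phi> (\<sigma> x) ! (i - k) - \<phi> x ! (i - k)) mod int (ns ! (k + (i - k))) =
               (\<phi> (\<sigma> x') ! (i - k) - \<phi> x' ! (i - k)) mod int (ns ! (k + (i - k)))"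
      using j unfolding h_def by simp
    then show ?thesis unfolding e using False by simp
  qed
  have "\<forall>i. \<exists>c. i < m \<longrightarrow> (q ! i - c) mod int (ns ! i) - (p ! i - c) mod int (ns ! i)
                          = (q' ! i - c) mod int (ns ! i) - (p' ! i - c) mod int (ns ! i)"
  proof (intro allI)
    fix i show "\<exists>c. i < m \<longrightarrow> (q ! i - c) mod int (ns ! i) - (p ! i - c) mod int (ns ! i)
                          = (q' ! i - c) mod int (ns ! i) - (p' ! i - c) mod int (ns ! i)"
    proof (cases "i < m")
      case True
      have "int (ns ! i) > 0" "odd (int (ns ! i))" using nsge oddall True unfolding m_def by auto
      then show ?thesis using choose_c[OF _ _ congr[OF True]] by auto
    qed simp
  qed
  then obtain f where f0: "\<forall>i. i < m \<longrightarrow> (q ! i - f i) mod int (ns ! i) - (p ! i - f i) mod int (ns ! i)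
                          = (q' ! i - f i) mod int (ns ! i) - (p' ! i - f i) mod int (ns ! i)"
    by (rule choice[THEN exE])
  have f: "(q ! i - f i) mod int (ns ! i) - (p ! i - f i) mod int (ns ! i)
                          = (q' ! i - f i) mod int (ns ! i) - (p' ! i - f i) mod int (ns ! i)" if "i < m" for i
    using f0 that by blast
  define c where "c = map f [0..<m]"
  have lc: "length c = length ns" unfolding c_def m_def by simp
  define L where "L y = map (\<lambda>i. c ! i + (y ! i - c ! i) mod int (ns ! i)) [0..<m]" for y :: "int list"
  have Lwin: "L y \<in> window ns c" for y
  proof -
    have "(y ! i - c ! i) mod int (ns ! i) \<le> int (ns ! i) - 1 \<and> 0 \<le> (y ! i - c ! i) mod int (ns ! i)" if "i < m" for i
    proof -
      have "int (ns ! i) > 0" using nsge that unfolding m_def by force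
      then have "(y ! i - c ! i) mod int (ns ! i) < int (ns ! i)" "0 \<le> (y ! i - c ! i) mod int (ns ! i)" by simp_all
      then show ?thesis by linarith
    qed
    then show ?thesis unfolding window_def L_def m_def by auto
  qed
  have RL: "map (\<lambda>(x, n). (x - 1) mod int n + 1) (zip (L y) ns) = y" if "y \<in> box ns" for y
  proof (rule nth_equalityI)
    show "length (map (\<lambda>(x, n). (x - 1) mod int n + 1) (zip (L y) ns)) = length y"
      using that unfolding box_def L_def m_def by simp
  next
    fix i assume "i < length (map (\<lambda>(x, n). (x - 1) mod int n + 1) (zip (L y) ns))"
    then have i: "i < m" unfolding L_def m_def by simp
    have b: "1 \<le> y ! i" "y ! i \<le> int (ns ! i)" using that i unfolding box_def m_def by auto
    show "map (\<lambda>(x, n). (x - 1) mod int n + 1) (zip (L y) ns) ! i = y ! i"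
      using i lift_back[OF b] unfolding L_def m_def by simp
  qed
  have perL: "per_ext ns A (L y) = A y" if "y \<in> box ns" for y
    unfolding per_ext_def RL[OF that] ..
  have Linj: "y = z" if "y \<in> box ns" "z \<in> box ns" "L y = L z" for y z
  proof -
    have "map (\<lambda>(x, n). (x - 1) mod int n + 1) (zip (L y) ns) = map (\<lambda>(x, n). (x - 1) mod int n + 1) (zip (L z) ns)"
      using that(3) by simp
    then show ?thesis using RL[OF that(1)] RL[OF that(2)] by simp
  qed
  have Ldiff: "diff_vec (L y) (L z) = map (\<lambda>i. (z ! i - c ! i) mod int (ns ! i) - (y ! i - c ! i) mod int (ns ! i)) [0..<m]" for y z
    unfolding diff_vec_def L_def by (rule nth_equalityI) auto
  have rep: "window_has_repeated_diff ns A c"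
    unfolding window_has_repeated_diff_def has_repeated_diff_def
  proof (intro exI conjI)
    show "L p \<in> {a \<in> window ns c. per_ext ns A a = 1}" using Lwin perL boxes dots by auto
    show "L q \<in> {a \<in> window ns c. per_ext ns A a = 1}" using Lwin perL boxes dots by auto
    show "L p' \<in> {a \<in> window ns c. per_ext ns A a = 1}" using Lwin perL boxes dots by auto
    show "L q' \<in> {a \<in> window ns c. per_ext ns A a = 1}" using Lwin perL boxes dots by auto
    show "L p \<noteq> L q" using Linj[OF boxes(1) boxes(2)] pq by blast
    show "L p' \<noteq> L q'" using Linj[OF boxes(3) boxes(4)] pq' by blast
    show "(L p, L q) \<noteq> (L p', L q')" using Linj[OF boxes(1) boxes(3)] pp' by blast
    show "diff_vec (L p) (L q) = diff_vec (L p') (L q')"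
      unfolding Ldiff using f by (simp add: c_def)
  qed
  show ?thesis
    using lc rep unfolding periodic_costas_def by blast
qed

end
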